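(* Let $m\ge1$ and $T_{m,p}=\frac{1}{p+1}\binom{2p}{p}m^{p+1}$. Then $$\mathbf N^{\mathcal T}_m(z)=\frac{1}{2z}\sum_{p\ge0}T_{m,p}\left(z^{p+1}+\sqrt{1-4mz+2z^{p+1}+z^{2p+2}}-\sqrt{1-4mz}\right)$$ and $$\mathbf E^{\mathcal T}_m(z)=\frac{3}{2z}\sum_{p\ge0}\frac{pT_{m,p}}{p+2}\left(z^{p+1}+\sqrt{1-4mz+2z^{p+1}+z^{2p+2}}-\sqrt{1-4mz}\right).$$
   Context: An $m$-labeled unranked tree is a non-empty finite rooted tree with node labels in $\{1,\dots,m\}$ and linearly ordered children (any finite number); its size is its number of edges; $\mathcal T_{m,n}$ is the set of such trees of size $n$ (so $|\mathcal T_{m,p}|=T_{m,p}$). For such a tree $t$, $\|\mathrm{dag}(t)\|$ is the number of distinct subtrees of $t$ (subtree = a node with all its descendants, compared as ordered labeled trees), i.e. the number of nodes of its minimal dag, and $|\mathrm{dag}(t)|$, the number of edges of the minimal dag, is the sum over distinct subtrees of $t$ of the number of children of their root. Define $\mathbf N^{\mathcal T}_m(z)=\sum_{n\ge0}\big(\sum_{t\in\mathcal T_{m,n}}\|\mathrm{dag}(t)\|\big)z^n$ and $\mathbf E^{\mathcal T}_m(z)=\sum_{n\ge0}\big(\sum_{t\in\mathcal T_{m,n}}|\mathrm{dag}(t)|\big)z^n$. *)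

theory Defs
  imports "HOL-Analysis.Analysis"
begin

datatype utree = Node nat "utree list"

text \<open>Size = number of edges.\<close>
fun tsize :: "utree \<Rightarrow> nat" where
  "tsize (Node a ts) = length ts + sum_list (map tsize ts)"

fun labelled_in :: "nat \<Rightarrow> utree \<Rightarrow> bool" where
  "labelled_in m (Node a ts) = (1 \<le> a \<and> a \<le> m \<and> (\<forall>t\<in>set ts. labelled_in m t))"

fun subtrees :: "utree \<Rightarrow> utree set" where
  "subtrees (Node a ts) = insert (Node a ts) (\<Union>t\<in>set ts. subtrees t)"

fun num_children :: "utree \<Rightarrow> nat" where
  "num_children (Node a ts) = length ts"

definition trees :: "nat \<Rightarrow> nat \<Rightarrow> utree set" where
  "trees m n = {t. labelled_in m t \<and> tsize t = n}"

text \<open>||dag(t)||: number of nodes of the minimal dag = number of distinct subtrees.\<close>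
definition dag_nodes :: "utree \<Rightarrow> nat" where
  "dag_nodes t = card (subtrees t)"

text \<open>|dag(t)|: number of edges of the minimal dag.\<close>
definition dag_edges :: "utree \<Rightarrow> nat" where
  "dag_edges t = (\<Sum>s\<in>subtrees t. num_children s)"

text \<open>Coefficients of N^T_m and E^T_m.\<close>
definition NT_coeff :: "nat \<Rightarrow> nat \<Rightarrow> nat" where
  "NT_coeff m n = (\<Sum>t\<in>trees m n. dag_nodes t)"

definition ET_coeff :: "nat \<Rightarrow> nat \<Rightarrow> nat" where
  "ET_coeff m n = (\<Sum>t\<in>trees m n. dag_edges t)"

definition Tmp :: "nat \<Rightarrow> nat \<Rightarrow> complex" where
  "Tmp m p = of_real (1 / real (p + 1) * real ((2*p) choose p) * real m ^ (p + 1))"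

definition bracket :: "nat \<Rightarrow> nat \<Rightarrow> complex \<Rightarrow> complex" where
  "bracket m p z = z ^ (p + 1)
     + csqrt (1 - 4 * of_nat m * z + 2 * z ^ (p + 1) + z ^ (2 * p + 2))
     - csqrt (1 - 4 * of_nat m * z)"

end

theory Submission
  imports Defs "HOL-Analysis.FPS_Convergence"
begin


definition fsz :: "utree list \<Rightarrow> nat" where
  "fsz ts = sum_list (map (\<lambda>t. Suc (tsize t)) ts)"

lemma fsz_Nil[simp]: "fsz [] = 0" and fsz_Cons[simp]: "fsz (t#ts) = Suc (tsize t) + fsz ts"
  by (simp_all add: fsz_def)

lemma tsize_Node: "tsize (Node a ts) = fsz ts"
  by (induction ts) auto

lemma fsz_eq: "fsz ts = length ts + sum_list (map tsize ts)"
  using tsize_Node[of 0 ts] by simp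

definition flist :: "utree set \<Rightarrow> nat \<Rightarrow> utree list set" where
  "flist X n = {ts. set ts \<subseteq> X \<and> fsz ts = n}"

definition lv :: "utree set \<Rightarrow> nat \<Rightarrow> utree set" where
  "lv X k = {t\<in>X. tsize t = k}"

lemma flist_0: "flist X 0 = {[]}"
  by (auto simp: flist_def fsz_def)

lemma flist_Suc: "flist X (Suc n) = (\<Union>k\<le>n. (\<lambda>(t,ts). t#ts) ` (lv X k \<times> flist X (n-k)))"
proof (intro equalityI subsetI)
  fix ts assume "ts \<in> flist X (Suc n)"
  then obtain t us where ts: "ts = t#us" "t \<in> X" "set us \<subseteq> X" "Suc (tsize t) + fsz us = Suc n"
    by (cases ts) (auto simp: flist_def)
  then show "ts \<in> (\<Union>k\<le>n. (\<lambda>(t,ts). t#ts) ` (lv X k \<times> flist X (n-k)))"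
    by (auto simp: lv_def flist_def intro!: bexI[of _ "tsize t"] image_eqI[of _ _ "(t,us)"])
qed (auto simp: lv_def flist_def)

lemma flist_finite: "(\<And>k. k < n \<Longrightarrow> finite (lv X k)) \<Longrightarrow> finite (flist X n)"
proof (induction n rule: less_induct)
  case (less n)
  show ?case
  proof (cases n)
    case 0 then show ?thesis by (simp add: flist_0)
  next
    case (Suc n')
    have "finite (\<Union>k\<le>n'. (\<lambda>(t,ts). t#ts) ` (lv X k \<times> flist X (n'-k)))"
      using less Suc by (intro finite_UN_I finite_imageI finite_cartesian_product) auto
    then show ?thesis using Suc flist_Suc by simp
  qed
qed

lemma sum_flist_Suc:
  assumes "\<And>k. k \<le> n \<Longrightarrow> finite (lv X k)"
  shows "(\<Sum>ts\<in>flist X (Suc n). g ts) = (\<Sum>k\<le>n. \<Sum>t\<in>lv X k. \<Sum>ts\<in>flist X (n-k). g (t#ts))"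
proof -
  have fin: "finite (flist X j)" if "j \<le> n" for j
    using assms that by (intro flist_finite) auto
  have "(\<Sum>ts\<in>flist X (Suc n). g ts) = (\<Sum>k\<le>n. \<Sum>ts\<in>(\<lambda>(t,ts). t#ts) ` (lv X k \<times> flist X (n-k)). g ts)"
    unfolding flist_Suc
    by (rule sum.UNION_disjoint) (use assms fin in \<open>auto simp: lv_def flist_def\<close>)
  also have "\<dots> = (\<Sum>k\<le>n. \<Sum>(t,ts)\<in>lv X k \<times> flist X (n-k). g (t#ts))"
  proof (intro sum.cong refl)
    fix k
    have "inj_on (\<lambda>(t,ts). t#ts) (lv X k \<times> flist X (n-k))" by (auto simp: inj_on_def)
    then show "(\<Sum>ts\<in>(\<lambda>(t,ts). t#ts) ` (lv X k \<times> flist X (n-k)). g ts) = (\<Sum>(t,ts)\<in>lv X k \<times> flist X (n-k). g (t#ts))"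
      by (subst sum.reindex) (auto simp: case_prod_unfold)
  qed
  also have "\<dots> = (\<Sum>k\<le>n. \<Sum>t\<in>lv X k. \<Sum>ts\<in>flist X (n-k). g (t#ts))"
    by (simp add: sum.cartesian_product)
  finally show ?thesis .
qed

definition Lab :: "nat \<Rightarrow> utree set" where "Lab m = {t. labelled_in m t}"
definition Av :: "nat \<Rightarrow> utree \<Rightarrow> utree set" where "Av m s = {t. labelled_in m t \<and> s \<notin> subtrees t}"

lemma lv_Lab: "lv (Lab m) n = trees m n"
  by (auto simp: lv_def Lab_def trees_def)

lemma trees_eq: "trees m n = (\<lambda>(a,ts). Node a ts) ` ({1..m} \<times> flist (Lab m) n)"
proof (intro equalityI subsetI)
  fix t assume "t \<in> trees m n"
  then obtain a ts where "t = Node a ts" "labelled_in m (Node a ts)" "tsize (Node a ts) = n"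
    by (cases t) (auto simp: trees_def)
  then show "t \<in> (\<lambda>(a,ts). Node a ts) ` ({1..m} \<times> flist (Lab m) n)"
    by (auto simp: flist_def Lab_def fsz_eq intro!: image_eqI[of _ _ "(a,ts)"])
qed (auto simp: trees_def flist_def Lab_def fsz_eq)

lemma finite_trees: "finite (trees m n)"
proof (induction n rule: less_induct)
  case (less n)
  then show ?case unfolding trees_eq
    by (intro finite_imageI finite_cartesian_product flist_finite) (auto simp: lv_Lab less)
qed

lemma finite_flist_Lab: "finite (flist (Lab m) n)"
  by (intro flist_finite) (auto simp: lv_Lab finite_trees)

lemma card_trees: "card (trees m n) = m * card (flist (Lab m) n)"
proof -
  have "inj_on (\<lambda>(a,ts). Node a ts) ({1..m} \<times> flist (Lab m) n)"
    by (auto simp: inj_on_def)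
  then show ?thesis unfolding trees_eq
    by (simp add: card_image card_cartesian_product)
qed

lemma child_size: "c \<in> set ts \<Longrightarrow> tsize c < tsize (Node a ts)"
proof (induction ts)
  case (Cons x xs) then show ?case by (auto simp: tsize_Node)
qed simp

lemma self_subtree: "t \<in> subtrees t"
  by (cases t) auto

lemma subtree_size: "s \<in> subtrees t \<Longrightarrow> tsize s \<le> tsize t"
proof (induction t)
  case (Node a ts)
  then show ?case using child_size[of _ ts a] by (fastforce)
qed

lemma subtree_lab: "labelled_in m t \<Longrightarrow> s \<in> subtrees t \<Longrightarrow> labelled_in m s"
  by (induction t) auto

lemma finite_subtrees: "finite (subtrees t)"
  by (induction t) auto

lemma sum_set_le_sum_list: "(\<Sum>t\<in>set ts. f t) \<le> sum_list (map f ts :: nat list)"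
proof (induction ts)
  case (Cons x xs)
  then show ?case by (simp add: sum.insert_if)
qed simp

lemma card_subtrees: "card (subtrees t) \<le> Suc (tsize t)"
proof (induction t)
  case (Node a ts)
  have "card (subtrees (Node a ts)) \<le> Suc (card (\<Union>t\<in>set ts. subtrees t))"
    by (simp add: card_insert_le_m1 card_insert_if)
  also have "card (\<Union>t\<in>set ts. subtrees t) \<le> (\<Sum>t\<in>set ts. card (subtrees t))"
    by (rule card_UN_le) simp
  also have "\<dots> \<le> (\<Sum>t\<in>set ts. Suc (tsize t))"
    by (intro sum_mono) (use Node in auto)
  also have "\<dots> \<le> sum_list (map (\<lambda>t. Suc (tsize t)) ts)"
    by (rule sum_set_le_sum_list)
  finally show ?case using fsz_eq[of ts] by (simp add: fsz_def)
qed

lemma lv_Av: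
  assumes s: "labelled_in m s"
  shows "lv (Av m s) n = (\<lambda>(a,ts). Node a ts) ` ({1..m} \<times> flist (Av m s) n) - {s}"
proof (intro equalityI subsetI)
  fix t assume "t \<in> lv (Av m s) n"
  then obtain a ts where "t = Node a ts" "labelled_in m (Node a ts)" "tsize (Node a ts) = n"
     "s \<notin> subtrees (Node a ts)"
    by (cases t) (auto simp: lv_def Av_def)
  then show "t \<in> (\<lambda>(a,ts). Node a ts) ` ({1..m} \<times> flist (Av m s) n) - {s}"
    by (auto simp: flist_def Av_def fsz_eq intro!: image_eqI[of _ _ "(a,ts)"])
next
  fix t assume "t \<in> (\<lambda>(a,ts). Node a ts) ` ({1..m} \<times> flist (Av m s) n) - {s}"
  then show "t \<in> lv (Av m s) n"
    by (auto simp: lv_def flist_def Av_def fsz_eq)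
qed

lemma s_in_image:
  assumes s: "labelled_in m s"
  shows "s \<in> (\<lambda>(a,ts). Node a ts) ` ({1..m} \<times> flist (Av m s) (tsize s))"
proof -
  obtain a ts where st: "s = Node a ts" by (cases s)
  have "c \<in> Av m s" if "c \<in> set ts" for c
  proof -
    have "tsize c < tsize s" using child_size[OF that] st by simp
    then have "s \<notin> subtrees c" using subtree_size by force
    then show ?thesis using s st that by (auto simp: Av_def)
  qed
  then show ?thesis using s st
    by (auto simp: flist_def fsz_eq intro!: image_eqI[of _ _ "(a,ts)"])
qed

lemma lv_Av_sub: "lv (Av m s) n \<subseteq> trees m n"
  by (auto simp: lv_def Av_def trees_def)

lemma finite_lv_Av: "finite (lv (Av m s) n)"
  using finite_subset[OF lv_Av_sub finite_trees] .

lemma finite_flist_Av: "finite (flist (Av m s) n)"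
  by (intro flist_finite finite_lv_Av)

lemma card_lv_Av:
  assumes s: "labelled_in m s"
  shows "card (lv (Av m s) n) + (if tsize s = n then 1 else 0) = m * card (flist (Av m s) n)"
proof -
  have inj: "inj_on (\<lambda>(a,ts). Node a ts) ({1..m} \<times> flist (Av m s) n)"
    by (auto simp: inj_on_def)
  have c: "card ((\<lambda>(a,ts). Node a ts) ` ({1..m} \<times> flist (Av m s) n)) = m * card (flist (Av m s) n)"
    using inj by (simp add: card_image card_cartesian_product)
  have fin: "finite ((\<lambda>(a,ts). Node a ts) ` ({1..m} \<times> flist (Av m s) n))"
    using finite_flist_Av by blast
  show ?thesis
  proof (cases "tsize s = n")
    case True
    have "card ((\<lambda>(a,ts). Node a ts) ` ({1..m} \<times> flist (Av m s) n)) > 0"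
      using s_in_image[OF s] True fin by (auto simp: card_gt_0_iff)
    then show ?thesis using s_in_image[OF s] True lv_Av[OF s, of n] c fin
      by (simp add: card_Diff_singleton)
  next
    case False
    have "s \<notin> (\<lambda>(a,ts). Node a ts) ` ({1..m} \<times> flist (Av m s) n)"
      using False by (auto simp: flist_def fsz_eq)
    then show ?thesis using False lv_Av[OF s, of n] c by simp
  qed
qed

lemma contain_eq: "{t\<in>trees m n. s \<in> subtrees t} = trees m n - lv (Av m s) n"
  by (auto simp: trees_def lv_def Av_def)

lemma card_contain: "card {t\<in>trees m n. s \<in> subtrees t} = card (trees m n) - card (lv (Av m s) n)"
  unfolding contain_eq by (rule card_Diff_subset[OF finite_lv_Av lv_Av_sub])

lemma card_contain': "card {t\<in>trees m n. s \<in> subtrees t} + card (lv (Av m s) n) = card (trees m n)"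
  unfolding card_contain using card_mono[OF finite_trees lv_Av_sub] by simp

lemma sum_Suc_card: "(\<Sum>x\<in>A. Suc (f x)) = card A + sum f A"
proof -
  have "(\<Sum>x\<in>A. Suc (f x)) = (\<Sum>x\<in>A. 1 + f x)" by simp
  also have "\<dots> = card A + sum f A" by (simp only: sum.distrib) simp
  finally show ?thesis .
qed

definition cF :: "utree set \<Rightarrow> complex fps" where
  "cF X = Abs_fps (\<lambda>k. of_nat (card (lv X k)))"
definition fF :: "utree set \<Rightarrow> complex fps" where
  "fF X = Abs_fps (\<lambda>k. of_nat (card (flist X k)))"
definition lF :: "utree set \<Rightarrow> complex fps" where
  "lF X = Abs_fps (\<lambda>k. of_nat (\<Sum>ts\<in>flist X k. length ts))"

lemma fF_eq:
  assumes fin: "\<And>k. finite (lv X k)"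
  shows "fF X = 1 + fps_X * (cF X * fF X)"
proof (rule fps_ext)
  fix n show "fps_nth (fF X) n = fps_nth (1 + fps_X * (cF X * fF X)) n"
  proof (cases n)
    case 0 then show ?thesis by (simp add: fF_def flist_0)
  next
    case (Suc n')
    have "card (flist X (Suc n')) = (\<Sum>ts\<in>flist X (Suc n'). 1)" by simp
    also have "\<dots> = (\<Sum>k\<le>n'. \<Sum>t\<in>lv X k. \<Sum>ts\<in>flist X (n'-k). 1)"
      by (rule sum_flist_Suc) (use fin in auto)
    also have "\<dots> = (\<Sum>k\<le>n'. card (lv X k) * card (flist X (n'-k)))"
      by simp
    finally have "of_nat (card (flist X (Suc n'))) = (\<Sum>k\<le>n'. of_nat (card (lv X k)) * of_nat (card (flist X (n'-k))) :: complex)"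
      by simp
    moreover have "fps_nth (cF X * fF X) n' = (\<Sum>k\<le>n'. of_nat (card (lv X k)) * of_nat (card (flist X (n'-k))))"
      by (simp add: fps_mult_nth atLeast0AtMost cF_def fF_def)
    ultimately show ?thesis using Suc by (simp add: fF_def fps_X_mult_nth)
  qed
qed

lemma lF_eq:
  assumes fin: "\<And>k. finite (lv X k)"
  shows "lF X = fps_X * (cF X * (fF X + lF X))"
proof (rule fps_ext)
  fix n show "fps_nth (lF X) n = fps_nth (fps_X * (cF X * (fF X + lF X))) n"
  proof (cases n)
    case 0 then show ?thesis by (simp add: lF_def flist_0)
  next
    case (Suc n')
    have finf: "finite (flist X j)" for j by (intro flist_finite fin)
    have "(\<Sum>ts\<in>flist X (Suc n'). length ts) = (\<Sum>k\<le>n'. \<Sum>t\<in>lv X k. \<Sum>ts\<in>flist X (n'-k). length (t#ts))"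
      by (rule sum_flist_Suc) (use fin in auto)
    also have "\<dots> = (\<Sum>k\<le>n'. card (lv X k) * (card (flist X (n'-k)) + (\<Sum>ts\<in>flist X (n'-k). length ts)))"
      by (simp add: sum_Suc_card)
    finally have "of_nat (\<Sum>ts\<in>flist X (Suc n'). length ts) = (\<Sum>k\<le>n'. of_nat (card (lv X k)) * (of_nat (card (flist X (n'-k))) + of_nat (\<Sum>ts\<in>flist X (n'-k). length ts)) :: complex)"
      by (metis (no_types, lifting) of_nat_add of_nat_mult of_nat_sum sum.cong)
    moreover have "fps_nth (cF X * (fF X + lF X)) n' = (\<Sum>k\<le>n'. of_nat (card (lv X k)) * (of_nat (card (flist X (n'-k))) + of_nat (\<Sum>ts\<in>flist X (n'-k). length ts)))"
      by (simp add: fps_mult_nth atLeast0AtMost cF_def fF_def lF_def)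
    ultimately show ?thesis using Suc by (simp add: lF_def fps_X_mult_nth)
  qed
qed


lemma fps_sqrt_unique:
  fixes f g :: "complex fps"
  assumes "f^2 = g^2" "fps_nth f 0 = 1" "fps_nth g 0 = 1"
  shows "f = g"
proof -
  have "(f - g) * (f + g) = 0" using assms(1) by (simp add: algebra_simps power2_eq_square)
  moreover have "f + g \<noteq> 0"
  proof
    assume "f + g = 0"
    then have "fps_nth (f + g) 0 = 0" by simp
    then show False using assms by simp
  qed
  ultimately show ?thesis by simp
qed

definition scl :: "complex \<Rightarrow> complex fps \<Rightarrow> complex fps" where
  "scl c f = Abs_fps (\<lambda>n. c^n * fps_nth f n)"

lemma scl_mult: "scl c (f * g) = scl c f * scl c g"
proof (rule fps_ext)
  fix n
  have "fps_nth (scl c (f*g)) n = (\<Sum>i=0..n. c^i * fps_nth f i * (c^(n-i) * fps_nth g (n-i)))"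
    unfolding scl_def fps_mult_nth
    by (simp add: sum_distrib_left, intro sum.cong refl)
       (simp add: power_add[symmetric] algebra_simps)
  then show "fps_nth (scl c (f * g)) n = fps_nth (scl c f * scl c g) n"
    by (simp add: scl_def fps_mult_nth mult.assoc)
qed

lemma scl_one_plus_X: "scl c (1 + fps_X) = 1 + fps_const c * fps_X"
proof (rule fps_ext)
  fix n show "fps_nth (scl c (1 + fps_X)) n = fps_nth (1 + fps_const c * fps_X) n"
  proof (cases n)
    case 0 then show ?thesis by (simp add: scl_def)
  next
    case (Suc k) then show ?thesis by (cases k) (simp_all add: scl_def)
  qed
qed

definition Bf :: "nat \<Rightarrow> complex fps" where
  "Bf m = scl (- 4 * of_nat m) (fps_binomial (1/2))"

lemma Bf_sq: "(Bf m)^2 = 1 - fps_const (4 * of_nat m) * fps_X"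
proof -
  have h: "fps_binomial (1/2::complex) * fps_binomial (1/2) = fps_binomial (1/2+1/2)"
    by (rule fps_binomial_add_mult[symmetric])
  have h2: "(1/2 + 1/2 :: complex) = 1" by simp
  have "(Bf m)^2 = scl (- 4 * of_nat m) (fps_binomial (1/2) * fps_binomial (1/2))"
    unfolding Bf_def power2_eq_square scl_mult ..
  also have "\<dots> = scl (- 4 * of_nat m) (1 + fps_X)"
    unfolding h h2 fps_binomial_1 ..
  also have "\<dots> = 1 + fps_const (- 4 * of_nat m) * fps_X"
    by (rule scl_one_plus_X)
  also have "\<dots> = 1 - fps_const (4 * of_nat m) * fps_X"
    by (rule fps_ext) simp
  finally show ?thesis .
qed

lemma Bf_nth: "fps_nth (Bf m) n = ((1/2) gchoose n) * (- 4 * of_nat m)^n"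
  by (simp add: Bf_def scl_def)

lemma gch_rec: "of_nat (Suc k) * ((a::complex) gchoose Suc k) = (a - of_nat k) * (a gchoose k)"
  using gbinomial_absorption[of k a] gbinomial_absorb_comp[of a k] by simp

lemma mult_ac_helper: "Suc (2*n+1) * (Suc (2*n) * (B::nat)) = B * (2*n+1) * (2*n+2)"
  by (simp add: algebra_simps)

lemma cbin_rec0: "((2*n+2) choose Suc n) * (Suc n)^2 = (2*n choose n) * (2*n+1) * (2*n+2)"
proof -
  have a: "Suc (2*n+1) * ((2*n+1) choose n) = ((2*n+2) choose Suc n) * Suc n"
    using Suc_times_binomial_eq[of "2*n+1" n] by simp
  have b: "Suc (2*n) * ((2*n) choose n) = ((2*n+1) choose Suc n) * Suc n"
    using Suc_times_binomial_eq[of "2*n" n] by simp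
  have c: "((2*n+1) choose Suc n) = ((2*n+1) choose n)"
    using binomial_symmetric[of n "2*n+1"] by simp
  have "((2*n+2) choose Suc n) * (Suc n)^2 = (((2*n+2) choose Suc n) * Suc n) * Suc n"
    by (simp only: power2_eq_square mult.assoc)
  also have "\<dots> = Suc (2*n+1) * (((2*n+1) choose n) * Suc n)" using a by (metis mult.commute mult.left_commute)
  also have "\<dots> = Suc (2*n+1) * (Suc (2*n) * ((2*n) choose n))" using b c by (simp only:)
  also have "\<dots> = ((2*n) choose n) * (2*n+1) * (2*n+2)"
    using mult_ac_helper[of n "(2*n) choose n"] .
  finally show ?thesis .
qed

lemma cbin_rec: "((2*Suc n) choose Suc n) * (Suc n)^2 = (2*n choose n) * (2*n+1) * (2*n+2)"
proof -
  have "2 * Suc n = 2*n+2" by simp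
  then show ?thesis using cbin_rec0[of n] by (simp only:)
qed

lemma helper1: "(k::complex) \<noteq> 0 \<Longrightarrow> k * G' = c * G \<Longrightarrow> G' * w * w0 = (G * w) * (c * w0) / k"
  by (simp add: field_simps)

lemma helper2: "(a::complex) \<noteq> 0 \<Longrightarrow> b \<noteq> 0 \<Longrightarrow> -2*C/a*(2*x)/b = -2*(2*C*x/a)/b"
  by (simp add: field_simps)

lemma gch_half: "((1/2::complex) gchoose Suc n) * (-4)^Suc n = - 2 * of_nat ((2*n) choose n) / of_nat (Suc n)"
proof (induction n)
  case 0 then show ?case by simp
next
  case (Suc n)
  have r: "of_nat (Suc (Suc n)) * ((1/2::complex) gchoose Suc (Suc n)) = (1/2 - of_nat (Suc n)) * (1/2 gchoose Suc n)"
    by (rule gch_rec)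
  have cb: "of_nat ((2*Suc n) choose Suc n) * (of_nat (Suc n))^2 = (of_nat (2*n choose n) * (2 * of_nat n+1) * (2 * of_nat n+2) :: complex)"
    using arg_cong[OF cbin_rec[of n], of "of_nat :: nat \<Rightarrow> complex"]
    by (simp only: of_nat_mult of_nat_add of_nat_power of_nat_numeral of_nat_1)
  have nzz: "(of_nat (Suc (Suc n)) :: complex) \<noteq> 0" by (simp only: of_nat_eq_0_iff)
  have "((1/2::complex) gchoose Suc (Suc n)) * (-4)^Suc (Suc n) = ((1/2::complex) gchoose Suc (Suc n)) * (-4)^Suc n * (-4)"
    by (simp only: power_Suc[of _ "Suc n"] mult.commute mult.left_commute)
  also have "\<dots> = ((1/2 gchoose Suc n) * (-4)^Suc n) * ((1/2 - of_nat (Suc n)) * (-4)) / of_nat (Suc (Suc n))"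
    by (rule helper1[OF nzz r])
  also have "\<dots> = - 2 * of_nat ((2*n) choose n) / of_nat (Suc n) * ((1/2 - of_nat (Suc n)) * (-4)) / of_nat (Suc (Suc n))"
    unfolding Suc.IH ..
  also have "\<dots> = - 2 * of_nat ((2*Suc n) choose Suc n) / of_nat (Suc (Suc n))"
  proof -
    have nz: "(of_nat (Suc n) :: complex) \<noteq> 0" "(of_nat (Suc (Suc n)) :: complex) \<noteq> 0"
      by (simp_all del: of_nat_Suc)
    define C where "C = (of_nat (2*n choose n)::complex)"
    define D where "D = (of_nat ((2*Suc n) choose Suc n)::complex)"
    have cb': "D * (of_nat (Suc n))^2 = C * (2 * of_nat n+1) * (2 * of_nat n+2)"
      using cb unfolding C_def D_def .
    have "- 2 * C / of_nat (Suc n) * ((1/2 - of_nat (Suc n)) * (-4)) / of_nat (Suc (Suc n)) = - 2 * D / of_nat (Suc (Suc n))"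
    proof -
      have n1: "of_nat n + (1::complex) \<noteq> 0"
      proof -
        have "of_nat n + (1::complex) = of_nat (n+1)" by simp
        moreover have "of_nat (n+1) \<noteq> (0::complex)" by (simp only: of_nat_eq_0_iff)
        ultimately show ?thesis by metis
      qed
      have n2: "of_nat n + (2::complex) \<noteq> 0"
      proof -
        have "of_nat n + (2::complex) = of_nat (n+2)" by simp
        moreover have "of_nat (n+2) \<noteq> (0::complex)" by (simp only: of_nat_eq_0_iff)
        ultimately show ?thesis by metis
      qed
      have e1: "(D * (of_nat n + 1)) * (of_nat n + 1) = (2*C*(2 * of_nat n+1)) * (of_nat n + 1)"
        using cb' by (simp add: algebra_simps power2_eq_square)
      have e2: "D * (of_nat n + 1) = 2*C*(2 * of_nat n+1)"
        using e1 n1 by (simp only: mult_cancel_right) simp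
      have e3: "D = 2*C*(2 * of_nat n+1) / (of_nat n + 1)"
        using e2 n1 by (simp add: field_simps)
      have e4: "(1/2 - (of_nat n + 1)) * (-4::complex) = 2*(2 * of_nat n + 1)"
        by (simp add: algebra_simps)
      have e5: "of_nat (Suc n) = (of_nat n + 1 :: complex)" by simp
      show ?thesis unfolding e3 e5 e4 using helper2[OF n1 nzz] .
    qed
    then show ?thesis unfolding C_def D_def .
  qed
  finally show ?case .
qed


abbreviation "MM m \<equiv> fps_const (of_nat m :: complex)"

lemma fin_lv_Lab: "finite (lv (Lab m) k)"
  by (simp add: lv_Lab finite_trees)

lemma Tt_nth: "fps_nth (cF (Lab m)) n = of_nat (card (trees m n))"
  by (simp add: cF_def lv_Lab)

lemma Tt_eq: "cF (Lab m) = MM m * fF (Lab m)"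
  by (rule fps_ext) (simp add: cF_def fF_def lv_Lab card_trees)

lemma Ff_eq: "fF (Lab m) = 1 + fps_X * (cF (Lab m) * fF (Lab m))"
  by (rule fF_eq[OF fin_lv_Lab])

lemma four_M: "fps_const (4 * of_nat m :: complex) = 4 * MM m"
  by (rule fps_ext) (simp add: fps_numeral_nth)

lemma S_sq: "(1 - 2 * fps_X * cF (Lab m))^2 = 1 - fps_const (4 * of_nat m) * fps_X"
proof -
  have e1: "cF (Lab m) = MM m * fF (Lab m)" by (rule Tt_eq)
  have e2: "fF (Lab m) = 1 + fps_X * (cF (Lab m) * fF (Lab m))" by (rule Ff_eq)
  show ?thesis unfolding four_M using e1 e2 by algebra
qed

lemma S_eq_Bf: "1 - 2 * fps_X * cF (Lab m) = Bf m"
  by (rule fps_sqrt_unique) (simp_all add: S_sq Bf_sq Bf_nth)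

lemma neg4: "(- (4 * c))^n = (-4)^n * (c::complex)^n"
proof -
  have "- (4 * c) = (-4) * c" by simp
  then show ?thesis by (simp only: power_mult_distrib)
qed

lemma helper3: "(-2::complex) * a = -2 * b / c * d \<Longrightarrow> a = b * d / c"
  by (cases "c = 0") (simp_all add: field_simps)

lemma card_trees_closed: "(of_nat (card (trees m n)) :: complex) = of_nat ((2*n) choose n) * of_nat m ^ Suc n / of_nat (Suc n)"
proof -
  have "fps_nth (1 - 2 * fps_X * cF (Lab m)) (Suc n) = - 2 * of_nat (card (trees m n))"
    by (simp add: Tt_nth mult.assoc)
  also have "fps_nth (1 - 2 * fps_X * cF (Lab m)) (Suc n) = ((1/2) gchoose Suc n) * (-4)^Suc n * of_nat m ^ Suc n"
    unfolding S_eq_Bf Bf_nth by (simp only: power_mult_distrib mult.assoc)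
  finally have "- 2 * of_nat (card (trees m n)) = - 2 * of_nat ((2*n) choose n) / of_nat (Suc n) * (of_nat m ^ Suc n :: complex)"
    unfolding gch_half by simp
  then show ?thesis by (rule helper3)
qed

lemma card_trees_Tmp: "of_nat (card (trees m n)) = Tmp m n"
  unfolding card_trees_closed Tmp_def
  by (simp add: field_simps)

lemma Av_rel:
  assumes "labelled_in m s"
  shows "cF (Av m s) + fps_X ^ tsize s = MM m * fF (Av m s)"
proof (rule fps_ext)
  fix n
  have "card (lv (Av m s) n) + (if tsize s = n then 1 else 0) = m * card (flist (Av m s) n)"
    by (rule card_lv_Av[OF assms])
  then have "(of_nat (card (lv (Av m s) n) + (if tsize s = n then 1 else 0)) :: complex) = of_nat (m * card (flist (Av m s) n))"
    by (simp only:)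
  then show "fps_nth (cF (Av m s) + fps_X ^ tsize s) n = fps_nth (MM m * fF (Av m s)) n"
    by (cases "tsize s = n") (auto simp: cF_def fF_def add.commute)
qed

lemma Gf_eq: "fF (Av m s) = 1 + fps_X * (cF (Av m s) * fF (Av m s))"
  by (rule fF_eq[OF finite_lv_Av])

lemma R_sq:
  assumes "labelled_in m s"
  shows "(1 - fps_X^(tsize s + 1) - 2 * fps_X * cF (Av m s))^2 =
     1 - fps_const (4 * of_nat m) * fps_X + 2 * fps_X^(tsize s + 1) + fps_X^(2 * tsize s + 2)"
proof -
  define P where "P = (fps_X :: complex fps) ^ tsize s"
  have e1: "fps_X^(tsize s + 1) = fps_X * P" by (simp add: P_def)
  have h: "2 * tsize s + 2 = Suc (Suc (tsize s + tsize s))" by simp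
  have "(fps_X :: complex fps)^(2 * tsize s + 2) = fps_X * (fps_X * (fps_X ^ tsize s * fps_X ^ tsize s))"
    unfolding h by (simp only: power_Suc power_add)
  then have e2: "(fps_X :: complex fps)^(2 * tsize s + 2) = fps_X * fps_X * P * P"
    by (simp only: P_def mult.assoc)
  have a1: "cF (Av m s) + P = MM m * fF (Av m s)" using Av_rel[OF assms] by (simp add: P_def)
  have a2: "fF (Av m s) = 1 + fps_X * (cF (Av m s) * fF (Av m s))" by (rule Gf_eq)
  show ?thesis unfolding e1 e2 four_M using a1 a2 by algebra
qed

lemma W_eq: "(\<Sum>s\<in>trees m p. num_children s) = m * (\<Sum>ts\<in>flist (Lab m) p. length ts)"
proof -
  have inj: "inj_on (\<lambda>(a,ts). Node a ts) ({1..m} \<times> flist (Lab m) p)"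
    by (auto simp: inj_on_def)
  have "(\<Sum>s\<in>trees m p. num_children s) = (\<Sum>(a,ts)\<in>{1..m} \<times> flist (Lab m) p. length ts)"
    unfolding trees_eq by (subst sum.reindex[OF inj]) (simp add: case_prod_unfold)
  also have "\<dots> = m * (\<Sum>ts\<in>flist (Lab m) p. length ts)"
    by (simp add: sum.cartesian_product[symmetric])
  finally show ?thesis .
qed

lemma L_rel: "fps_X * (MM m * (MM m * lF (Lab m))) = cF (Lab m) - MM m - fps_X * (MM m * cF (Lab m))"
proof -
  have e1: "cF (Lab m) = MM m * fF (Lab m)" by (rule Tt_eq)
  have e2: "fF (Lab m) = 1 + fps_X * (cF (Lab m) * fF (Lab m))" by (rule Ff_eq)
  have e3: "lF (Lab m) = fps_X * (cF (Lab m) * (fF (Lab m) + lF (Lab m)))" by (rule lF_eq[OF fin_lv_Lab])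
  show ?thesis using e1 e2 e3 by algebra
qed

lemma helper5:
  fixes a b x B K W :: complex
  assumes "a \<noteq> 0" "b \<noteq> 0" "W = 2 * B * (2*x+1) / a * K / b - B * K / a" "a = x + 1" "b = x + 2"
  shows "W = 3 * (x * (B * K / a) / b)"
proof -
  have t1: "(2 * B * (2*x+1) / a * K / b) * (a * b) = 2 * B * (2*x+1) * K" using assms(1,2) by (simp add: field_simps)
  have t2: "(B * K / a) * (a * b) = B * K * b" using assms(1) by (simp add: field_simps)
  have "W * (a * b) = 2 * B * (2*x+1) * K - B * K * b" unfolding assms(3) left_diff_distrib t1 t2 ..
  also have "\<dots> = 3 * x * B * K" using assms(5) by (simp add: algebra_simps)
  finally have "W * (a * b) = 3 * x * B * K" .
  then show ?thesis using assms(1,2) by (simp add: field_simps)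
qed

lemma helper4:
  fixes x B B' M W Mp :: complex
  assumes "x + 1 \<noteq> 0" "x + 2 \<noteq> 0" "M \<noteq> 0"
    "B' * (x + 1)^2 = B * (2*x+1) * (2*x+2)"
    "M * W = B' * (M * (M * Mp)) / (x + 2) - M * (B * (M * Mp) / (x + 1))"
  shows "W = 3 * (x * (B * (M * Mp) / (x + 1)) / (x + 2))"
proof -
  have "(B' * (x + 1)) * (x + 1) = (2 * B * (2*x+1)) * (x + 1)"
    using assms(4) by (simp add: algebra_simps power2_eq_square)
  then have "B' * (x + 1) = 2 * B * (2*x+1)"
    using assms(1) by (simp only: mult_cancel_right) simp
  then have b: "B' = 2 * B * (2*x+1) / (x+1)"
    using assms(1) by (simp add: field_simps)
  have "M * W = M * (B' * (M * Mp) / (x + 2) - (B * (M * Mp) / (x + 1)))"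
    using assms(5) by (simp add: right_diff_distrib)
  then have "W = B' * (M * Mp) / (x + 2) - (B * (M * Mp) / (x + 1))"
    using assms(3) by simp
  then show ?thesis unfolding b using helper5[OF assms(1,2) _ refl refl] by simp
qed

lemma W_closed:
  assumes "m \<ge> 1"
  shows "(of_nat (\<Sum>s\<in>trees m p. num_children s) :: complex) = 3 * (of_nat p * Tmp m p / of_nat (p+2))"
proof -
  define L where "L = (\<Sum>ts\<in>flist (Lab m) p. length ts)"
  have "fps_nth (fps_X * (MM m * (MM m * lF (Lab m)))) (Suc p) = fps_nth (cF (Lab m) - MM m - fps_X * (MM m * cF (Lab m))) (Suc p)"
    by (simp only: L_rel)
  then have c: "of_nat m * (of_nat m * of_nat L) = (of_nat (card (trees m (Suc p))) - of_nat m * of_nat (card (trees m p)) :: complex)"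
    by (simp add: lF_def Tt_nth L_def)
  define B where "B = (of_nat ((2*p) choose p) :: complex)"
  define B' where "B' = (of_nat ((2*Suc p) choose Suc p) :: complex)"
  define M where "M = (of_nat m :: complex)"
  define x where "x = (of_nat p :: complex)"
  have M0: "M \<noteq> 0" using assms by (simp add: M_def)
  have x1: "x + 1 \<noteq> 0"
  proof -
    have "x + 1 = of_nat (p+1)" by (simp add: x_def)
    moreover have "of_nat (p+1) \<noteq> (0::complex)" by (simp only: of_nat_eq_0_iff)
    ultimately show ?thesis by metis
  qed
  have x2: "x + 2 \<noteq> 0"
  proof -
    have "x + 2 = of_nat (p+2)" by (simp add: x_def)
    moreover have "of_nat (p+2) \<noteq> (0::complex)" by (simp only: of_nat_eq_0_iff)
    ultimately show ?thesis by metis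
  qed
  have cb: "B' * (x + 1)^2 = B * (2*x+1) * (2*x+2)"
    using arg_cong[OF cbin_rec[of p], of "of_nat :: nat \<Rightarrow> complex"] unfolding B_def B'_def x_def
    by (simp only: of_nat_mult of_nat_add of_nat_power of_nat_numeral of_nat_1 of_nat_Suc add.commute)
  have T1: "of_nat (card (trees m (Suc p))) = B' * (M * (M * M^p)) / (x + 2)"
    unfolding card_trees_closed B'_def M_def x_def by (simp add: add.commute)
  have T0: "of_nat (card (trees m p)) = B * (M * M^p) / (x + 1)"
    unfolding card_trees_closed B_def M_def x_def by (simp add: add.commute)
  have W: "(of_nat (\<Sum>s\<in>trees m p. num_children s) :: complex) = M * of_nat L"
    unfolding W_eq L_def M_def by simp
  have "M * (M * of_nat L) = B' * (M * (M * M^p)) / (x + 2) - M * (B * (M * M^p) / (x + 1))"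
    using c unfolding T1 T0 M_def by simp
  then have "M * of_nat L = 3 * (x * (B * (M * M^p) / (x + 1)) / (x + 2))"
    by (intro helper4[OF x1 x2 M0 cb])
  moreover have "Tmp m p = B * (M * M^p) / (x + 1)"
    unfolding card_trees_Tmp[symmetric] T0 ..
  ultimately show ?thesis unfolding W x_def by (simp add: add.commute)
qed


lemma double_sum:
  fixes e :: "nat \<Rightarrow> nat \<Rightarrow> nat" and z :: complex and b :: "nat \<Rightarrow> complex"
  assumes vanish: "\<And>p n. n < p \<Longrightarrow> e p n = 0"
    and summ: "summable (\<lambda>n. real (\<Sum>p\<le>n. e p n) * norm z ^ n)"
    and bp: "\<And>p. (\<lambda>n. of_nat (e p n) * z^n) sums b p"
  shows "\<exists>S. (\<lambda>n. of_nat (\<Sum>p\<le>n. e p n) * z^n) sums S \<and> b sums S"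
proof -
  define g where "g = (\<lambda>(n,p). of_nat (e p n) * z^n :: complex)"
  define c where "c = (\<lambda>n. \<Sum>p\<le>n. e p n)"
  have inner: "((\<lambda>p. f (e p n)) has_sum (\<Sum>p\<le>n. f (e p n))) UNIV" if "f 0 = 0" for f :: "nat \<Rightarrow> 'a::{topological_comm_monoid_add, t2_space}" and n
    by (rule has_sum_finite_neutralI) (use vanish that in auto)
  have abs1: "(\<lambda>x. norm (g x)) summable_on (Sigma UNIV (\<lambda>_. UNIV))"
  proof (rule summable_on_SigmaI)
    fix n :: nat
    show "((\<lambda>p. norm (g (n, p))) has_sum real (c n) * norm z ^ n) UNIV"
      using inner[of "\<lambda>k. real k * norm z ^ n" n]
      by (simp add: g_def c_def norm_mult norm_power sum_distrib_right)
  next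
    show "(\<lambda>n. real (c n) * norm z ^ n) summable_on UNIV"
      using summ unfolding c_def by (subst summable_on_UNIV_nonneg_real_iff) (auto intro!: mult_nonneg_nonneg sum_nonneg)
  qed auto
  then have gs: "g summable_on (Sigma UNIV (\<lambda>_. UNIV))"
    using summable_on_iff_abs_summable_on_complex by blast
  have nrm: "norm (of_nat (c n) * z^n) = real (c n) * norm z ^ n" for n
    by (simp add: norm_mult norm_power)
  have nsum: "summable (\<lambda>n. norm (of_nat (c n) * z^n))"
    unfolding nrm using summ by (simp add: c_def)
  obtain S where S: "(\<lambda>n. of_nat (c n) * z^n) sums S"
    using summable_norm_cancel[OF nsum] by (auto simp: summable_def)
  have hs: "((\<lambda>n. of_nat (c n) * z^n) has_sum S) UNIV"
    by (rule norm_summable_imp_has_sum[OF nsum S])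
  have gh: "(g has_sum S) (Sigma UNIV (\<lambda>_. UNIV))"
  proof (rule has_sum_SigmaI[OF _ hs gs])
    fix n :: nat
    show "((\<lambda>p. g (n, p)) has_sum of_nat (c n) * z ^ n) UNIV"
      using inner[of "\<lambda>k. of_nat k * z ^ n" n]
      by (simp add: g_def c_def sum_distrib_right)
  qed
  then have gh2: "((\<lambda>(p,n). g (n,p)) has_sum S) (UNIV \<times> UNIV)"
    using has_sum_swap[THEN iffD1, OF gh] by simp
  have "(b has_sum S) UNIV"
  proof (rule has_sum_Sigma'[OF gh2[unfolded UNIV_Times_UNIV[symmetric]]])
    fix p :: nat
    have le: "e p n \<le> c n" for n
    proof (cases "p \<le> n")
      case True then show ?thesis unfolding c_def by (intro member_le_sum) auto
    next
      case False then show ?thesis using vanish by simp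
    qed
    have ns: "summable (\<lambda>n. norm (of_nat (e p n) * z^n))"
      by (rule summable_comparison_test[OF _ nsum])
         (auto simp: norm_mult norm_power intro!: mult_right_mono le)
    show "((\<lambda>n. case (p, n) of (p, n) \<Rightarrow> g (n, p)) has_sum b p) UNIV"
      using norm_summable_imp_has_sum[OF ns bp[of p]] by (simp add: g_def)
  qed
  then have "b sums S" by (rule has_sum_imp_sums)
  with S show ?thesis unfolding c_def by blast
qed


lemma rad_mult_I [simp]: "norm z < fps_conv_radius f \<Longrightarrow> norm z < fps_conv_radius g \<Longrightarrow> norm (z::complex) < fps_conv_radius (f*g)"
  using fps_conv_radius_mult[of f g] by (meson min_less_iff_conj less_le_trans)
lemma rad_add_I [simp]: "norm z < fps_conv_radius f \<Longrightarrow> norm z < fps_conv_radius g \<Longrightarrow> norm (z::complex) < fps_conv_radius (f+g)"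
  using fps_conv_radius_add[of f g] by (meson min_less_iff_conj less_le_trans)
lemma rad_diff_I [simp]: "norm z < fps_conv_radius f \<Longrightarrow> norm z < fps_conv_radius g \<Longrightarrow> norm (z::complex) < fps_conv_radius (f-g)"
  using fps_conv_radius_diff[of f g] by (meson min_less_iff_conj less_le_trans)
lemma rad_pow_I [simp]: "norm z < fps_conv_radius f \<Longrightarrow> norm (z::complex) < fps_conv_radius (f^k)"
  using fps_conv_radius_power[of f k] by (meson less_le_trans)

lemmas eval_simps = eval_fps_mult eval_fps_add eval_fps_diff eval_fps_power

lemma eval_S:
  assumes "norm z < fps_conv_radius (cF (Lab m))"
  shows "(1 - 2 * z * eval_fps (cF (Lab m)) z)^2 = 1 - 4 * of_nat m * z"
proof -
  have "eval_fps ((1 - 2 * fps_X * cF (Lab m))^2) z = eval_fps (1 - fps_const (4 * of_nat m) * fps_X) z"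
    by (simp only: S_sq)
  then show ?thesis using assms by (simp add: eval_simps)
qed

lemma eval_R:
  assumes "norm z < fps_conv_radius (cF (Av m s))" "labelled_in m s"
  shows "(1 - z^(tsize s + 1) - 2 * z * eval_fps (cF (Av m s)) z)^2 =
     1 - 4 * of_nat m * z + 2 * z^(tsize s + 1) + z^(2 * tsize s + 2)"
proof -
  have "eval_fps ((1 - fps_X^(tsize s + 1) - 2 * fps_X * cF (Av m s))^2) z =
        eval_fps (1 - fps_const (4 * of_nat m) * fps_X + 2 * fps_X^(tsize s + 1) + fps_X^(2 * tsize s + 2)) z"
    by (simp only: R_sq[OF assms(2)])
  then show ?thesis using assms by (simp add: eval_simps)
qed

lemma tcount: "card (trees m n) \<le> m * (4*m)^n"
proof -
  have nz: "(of_nat (Suc n) :: complex) \<noteq> 0" by (simp only: of_nat_eq_0_iff)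
  have "(of_nat (card (trees m n)) :: complex) * of_nat (Suc n) = of_nat ((2*n) choose n) * of_nat m ^ Suc n"
    using card_trees_closed[of m n] nz by (simp add: field_simps)
  then have "(of_nat (card (trees m n) * Suc n) :: complex) = of_nat (((2*n) choose n) * m^Suc n)"
    by (simp only: of_nat_mult of_nat_power)
  then have eq: "card (trees m n) * Suc n = ((2*n) choose n) * m^Suc n" by (simp only: of_nat_eq_iff)
  have "card (trees m n) \<le> card (trees m n) * Suc n" by simp
  also have "\<dots> \<le> 2^(2*n) * m^Suc n" unfolding eq using binomial_le_pow2[of "2*n" n] by simp
  also have "\<dots> = m * (4*m)^n" by (simp add: power_mult power_mult_distrib)
  finally show ?thesis .
qed

definition cbd :: "nat \<Rightarrow> complex fps \<Rightarrow> bool" where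
  "cbd m f \<longleftrightarrow> (\<forall>n. norm (fps_nth f n) \<le> real m * (4 * real m)^n)"

lemma cbd_T: "cbd m (cF (Lab m))"
  unfolding cbd_def Tt_nth
proof
  fix n
  have "real (card (trees m n)) \<le> real (m * (4*m)^n)" using tcount by (simp only: of_nat_le_iff)
  then show "norm (of_nat (card (trees m n)) :: complex) \<le> real m * (4 * real m)^n" by simp
qed

lemma cbd_A: "cbd m (cF (Av m s))"
  unfolding cbd_def
proof
  fix n
  have "card (lv (Av m s) n) \<le> card (trees m n)" by (rule card_mono[OF finite_trees lv_Av_sub])
  also have "\<dots> \<le> m * (4*m)^n" by (rule tcount)
  finally have "real (card (lv (Av m s) n)) \<le> real (m * (4*m)^n)" by (simp only: of_nat_le_iff)
  then show "norm (fps_nth (cF (Av m s)) n) \<le> real m * (4 * real m)^n" by (simp add: cF_def)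
qed

lemma cbd_term:
  assumes "cbd m f" "m \<ge> 1" "norm w \<le> q / (4 * real m)" "q \<ge> 0"
  shows "norm (fps_nth f n * w^n) \<le> real m * q^n"
proof -
  have "norm (fps_nth f n * w^n) = norm (fps_nth f n) * norm w ^ n" by (simp add: norm_mult norm_power)
  also have "\<dots> \<le> (real m * (4 * real m)^n) * (q / (4 * real m))^n"
    using assms(1,3) unfolding cbd_def by (intro mult_mono power_mono) auto
  also have "\<dots> = real m * q^n" using assms(2) by (simp add: power_divide field_simps)
  finally show ?thesis .
qed

lemma cbd_rad:
  assumes "cbd m f" "m \<ge> 1"
  shows "ereal (1/(8*real m)) \<le> fps_conv_radius f"
proof -
  define w where "w = complex_of_real (1/(8*real m))"
  have nw: "norm w = 1/(8*real m)" unfolding w_def norm_of_real using assms(2) by simp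
  have "summable (\<lambda>n. fps_nth f n * w^n)"
  proof (rule summable_comparison_test')
    show "summable (\<lambda>n. real m * (1/2)^n)" by (intro summable_mult summable_geometric) simp
    fix n :: nat
    show "norm (fps_nth f n * w^n) \<le> real m * (1/2)^n"
      by (rule cbd_term[OF assms]) (use assms(2) in \<open>simp_all add: nw field_simps\<close>)
  qed
  from conv_radius_geI[OF this] show ?thesis using nw by (simp add: fps_conv_radius_def)
qed

lemma cbd_eval:
  assumes "cbd m f" "m \<ge> 1" "norm z \<le> 1/(32 * real m)"
  shows "norm (eval_fps f z) \<le> 2 * real m"
proof -
  have b: "norm (fps_nth f n * z^n) \<le> real m * (1/8)^n" for n
    by (rule cbd_term[OF assms(1,2)]) (use assms(2,3) in \<open>simp_all add: field_simps\<close>)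
  have sg: "summable (\<lambda>n. real m * (1/8::real)^n)" by (intro summable_mult summable_geometric) simp
  have sn: "summable (\<lambda>n. norm (fps_nth f n * z^n))"
    by (rule summable_comparison_test'[OF sg]) (use b in simp)
  have "norm (eval_fps f z) \<le> (\<Sum>n. norm (fps_nth f n * z^n))"
    unfolding eval_fps_def by (rule summable_norm[OF sn])
  also have "\<dots> \<le> (\<Sum>n. real m * (1/8)^n)"
    by (rule suminf_le[OF b sn sg])
  also have "\<dots> = real m * (8/7)"
    by (subst suminf_mult[OF summable_geometric]) (simp_all add: suminf_geometric)
  also have "\<dots> \<le> 2 * real m" by simp
  finally show ?thesis .
qed

lemma Re_pos_aux:
  fixes u :: complex
  assumes "norm u < 1"
  shows "Re (1 - u) > 0"
proof -
  have "Re u \<le> norm u" using abs_Re_le_cmod[of u] by simp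
  then show ?thesis using assms by simp
qed

lemma s_sums:
  assumes m: "m \<ge> 1" and s: "labelled_in m s" and z0: "z \<noteq> 0" and zr: "norm z < 1/(32 * real m)"
  shows "(\<lambda>n. of_nat (card {t\<in>trees m n. s \<in> subtrees t}) * z^n) sums (bracket m (tsize s) z / (2*z))"
proof -
  define T where "T = cF (Lab m)"
  define A where "A = cF (Av m s)"
  define p where "p = tsize s"
  have mpos: "real m \<ge> 1" using m by simp
  have zr': "norm z \<le> 1/(32 * real m)" using zr by simp
  have z8: "ereal (norm z) < ereal (1/(8*real m))" using zr mpos by (simp add: field_simps)
  have rT: "norm z < fps_conv_radius T"
    using z8 cbd_rad[OF cbd_T m] unfolding T_def by (meson less_le_trans)
  have rA: "norm z < fps_conv_radius A"
    using z8 cbd_rad[OF cbd_A m] unfolding A_def by (meson less_le_trans)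
  define t where "t = eval_fps T z"
  define a where "a = eval_fps A z"
  have bt: "norm t \<le> 2 * real m" unfolding t_def T_def by (rule cbd_eval[OF cbd_T m zr'])
  have ba: "norm a \<le> 2 * real m" unfolding a_def A_def by (rule cbd_eval[OF cbd_A m zr'])
  have nz2: "norm z * real m \<le> 1/32" using zr' mpos by (simp add: field_simps)
  have "norm z * 1 \<le> norm z * real m" using mpos norm_ge_zero[of z] by (rule mult_left_mono)
  then have nz1: "norm z \<le> 1/32" using nz2 by simp
  have k1: "norm (2 * z * t) \<le> 1/8"
  proof -
    have "norm (2 * z * t) = 2 * (norm z * norm t)" by (simp add: norm_mult)
    also have "\<dots> \<le> 2 * (norm z * (2 * real m))" by (intro mult_left_mono bt) auto
    also have "\<dots> = 4 * (norm z * real m)" by simp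
    also have "\<dots> \<le> 1/8" using nz2 by simp
    finally show ?thesis .
  qed
  have k2: "norm (2 * z * a) \<le> 1/8"
  proof -
    have "norm (2 * z * a) = 2 * (norm z * norm a)" by (simp add: norm_mult)
    also have "\<dots> \<le> 2 * (norm z * (2 * real m))" by (intro mult_left_mono ba) auto
    also have "\<dots> = 4 * (norm z * real m)" by simp
    also have "\<dots> \<le> 1/8" using nz2 by simp
    finally show ?thesis .
  qed
  have k3: "norm (z^(p+1)) \<le> 1/32"
  proof -
    have "norm (z^(p+1)) = norm z ^ (p+1)" by (rule norm_power)
    also have "\<dots> \<le> norm z ^ 1" using nz1 by (intro power_decreasing) auto
    finally show ?thesis using nz1 by simp
  qed
  have sq1: "csqrt (1 - 4 * of_nat m * z) = 1 - 2 * z * t"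
  proof (rule csqrt_unique)
    show "(1 - 2 * z * t)^2 = 1 - 4 * of_nat m * z" unfolding t_def T_def by (rule eval_S[OF rT[unfolded T_def]])
    show "0 < Re (1 - 2 * z * t) \<or> Re (1 - 2 * z * t) = 0 \<and> 0 \<le> Im (1 - 2 * z * t)"
      using Re_pos_aux[of "2 * z * t"] k1 by simp
  qed
  have sq2: "csqrt (1 - 4 * of_nat m * z + 2 * z ^ (p + 1) + z ^ (2 * p + 2)) = 1 - z^(p+1) - 2 * z * a"
  proof (rule csqrt_unique)
    show "(1 - z^(p+1) - 2 * z * a)^2 = 1 - 4 * of_nat m * z + 2 * z ^ (p + 1) + z ^ (2 * p + 2)"
      unfolding a_def A_def p_def by (rule eval_R[OF rA[unfolded A_def] s])
    have "norm (z^(p+1) + 2 * z * a) \<le> norm (z^(p+1)) + norm (2 * z * a)" by (rule norm_triangle_ineq)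
    also have "\<dots> < 1" using k2 k3 by simp
    finally have "Re (1 - (z^(p+1) + 2 * z * a)) > 0" by (rule Re_pos_aux)
    then show "0 < Re (1 - z^(p+1) - 2 * z * a) \<or> Re (1 - z^(p+1) - 2 * z * a) = 0 \<and> 0 \<le> Im (1 - z^(p+1) - 2 * z * a)"
      by (simp add: algebra_simps)
  qed
  have br: "bracket m (tsize s) z / (2*z) = t - a"
  proof -
    have "bracket m (tsize s) z = 2 * z * (t - a)"
      unfolding bracket_def p_def[symmetric] sq1 sq2 by (simp add: algebra_simps)
    then show ?thesis using z0 by simp
  qed
  have "(\<lambda>n. fps_nth (T - A) n * z^n) sums eval_fps (T - A) z"
    by (rule sums_eval_fps) (use rT rA in simp)
  moreover have "eval_fps (T - A) z = t - a"
    unfolding t_def a_def by (rule eval_fps_diff[OF rT rA])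
  moreover have "fps_nth (T - A) n = of_nat (card {t\<in>trees m n. s \<in> subtrees t})" for n
  proof -
    have "card {t\<in>trees m n. s \<in> subtrees t} + card (lv (Av m s) n) = card (trees m n)"
      by (rule card_contain')
    then have "(of_nat (card {t\<in>trees m n. s \<in> subtrees t}) :: complex) = of_nat (card (trees m n)) - of_nat (card (lv (Av m s) n))"
      by (metis add_diff_cancel_right' of_nat_add)
    then show ?thesis by (simp add: T_def A_def cF_def lv_Lab)
  qed
  ultimately show ?thesis unfolding br by simp
qed


definition dd :: "nat \<Rightarrow> utree \<Rightarrow> nat \<Rightarrow> nat" where
  "dd m s n = card {t\<in>trees m n. s \<in> subtrees t}"

definition UU :: "nat \<Rightarrow> nat \<Rightarrow> utree set" where
  "UU m n = (\<Union>p\<le>n. trees m p)"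

lemma finite_UU: "finite (UU m n)"
  unfolding UU_def by (auto intro: finite_trees)

lemma subtrees_UU: "t \<in> trees m n \<Longrightarrow> subtrees t \<subseteq> UU m n"
  unfolding UU_def trees_def using subtree_size subtree_lab by fastforce

lemma trees_disj: "i \<noteq> j \<Longrightarrow> trees m i \<inter> trees m j = {}"
  by (auto simp: trees_def)

lemma sum_UU: "(\<Sum>s\<in>UU m n. g s) = (\<Sum>p\<le>n. \<Sum>s\<in>trees m p. g s)"
  unfolding UU_def
  by (rule sum.UNION_disjoint) (auto simp: finite_trees trees_disj)

lemma sum_over_subtrees:
  assumes "t \<in> trees m n"
  shows "(\<Sum>s\<in>subtrees t. f s) = (\<Sum>s\<in>UU m n. if s \<in> subtrees t then f s else 0)"
proof -
  have "(\<Sum>s\<in>UU m n. if s \<in> subtrees t then f s else 0) = (\<Sum>s\<in>{s\<in>UU m n. s \<in> subtrees t}. f s)"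
    by (rule sum.inter_filter[symmetric, OF finite_UU])
  also have "{s\<in>UU m n. s \<in> subtrees t} = subtrees t" using subtrees_UU[OF assms] by blast
  finally show ?thesis by simp
qed

lemma swap_count:
  "(\<Sum>t\<in>trees m n. \<Sum>s\<in>subtrees t. f s) = (\<Sum>p\<le>n. \<Sum>s\<in>trees m p. f s * dd m s n)"
proof -
  have "(\<Sum>t\<in>trees m n. \<Sum>s\<in>subtrees t. f s) = (\<Sum>t\<in>trees m n. \<Sum>s\<in>UU m n. if s \<in> subtrees t then f s else 0)"
    by (intro sum.cong refl sum_over_subtrees)
  also have "\<dots> = (\<Sum>s\<in>UU m n. \<Sum>t\<in>trees m n. if s \<in> subtrees t then f s else 0)"
    by (rule sum.swap)
  also have "\<dots> = (\<Sum>s\<in>UU m n. f s * dd m s n)"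
  proof (intro sum.cong refl)
    fix s
    have "(\<Sum>t\<in>trees m n. if s \<in> subtrees t then f s else 0) = (\<Sum>t\<in>{t\<in>trees m n. s \<in> subtrees t}. f s)"
      by (rule sum.inter_filter[symmetric, OF finite_trees])
    also have "\<dots> = f s * dd m s n" by (simp add: dd_def)
    finally show "(\<Sum>t\<in>trees m n. if s \<in> subtrees t then f s else 0) = f s * dd m s n" .
  qed
  also have "\<dots> = (\<Sum>p\<le>n. \<Sum>s\<in>trees m p. f s * dd m s n)" by (rule sum_UU)
  finally show ?thesis .
qed

lemma NT_eq: "NT_coeff m n = (\<Sum>p\<le>n. \<Sum>s\<in>trees m p. dd m s n)"
  using swap_count[where m=m and n=n and f="\<lambda>_. 1"] by (simp add: NT_coeff_def dag_nodes_def)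

lemma ET_eq: "ET_coeff m n = (\<Sum>p\<le>n. \<Sum>s\<in>trees m p. num_children s * dd m s n)"
  using swap_count[where m=m and n=n and f=num_children] by (simp add: ET_coeff_def dag_edges_def)

lemma dd_vanish:
  assumes "s \<in> trees m p" "n < p"
  shows "dd m s n = 0"
proof -
  have "{t\<in>trees m n. s \<in> subtrees t} = {}"
  proof safe
    fix t assume "t \<in> trees m n" "s \<in> subtrees t"
    then have "tsize s \<le> tsize t" "tsize t = n" "tsize s = p"
      using subtree_size assms(1) by (auto simp: trees_def)
    then show "t \<in> {}" using assms(2) by simp
  qed
  then show ?thesis unfolding dd_def by (simp only: card.empty)
qed

lemma sq_le_4pow: "(Suc n)^2 \<le> 4^n"
proof (induction n)
  case (Suc n)
  have "(Suc (Suc n))^2 \<le> 4 * (Suc n)^2" by (simp add: power2_eq_square)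
  also have "\<dots> \<le> 4 * 4^n" using Suc by simp
  finally show ?case by simp
qed simp

lemma NT_bound: "NT_coeff m n \<le> (Suc n)^2 * (m * (4*m)^n)"
proof -
  have "NT_coeff m n = (\<Sum>t\<in>trees m n. card (subtrees t))" by (simp add: NT_coeff_def dag_nodes_def)
  also have "\<dots> \<le> (\<Sum>t\<in>trees m n. Suc n)"
    by (intro sum_mono) (use card_subtrees in \<open>force simp: trees_def\<close>)
  also have "\<dots> = card (trees m n) * Suc n" by simp
  also have "\<dots> \<le> (m * (4*m)^n) * (Suc n)^2" by (intro mult_mono tcount) (auto simp: power2_eq_square)
  finally show ?thesis by (simp add: mult.commute)
qed

lemma ET_bound: "ET_coeff m n \<le> (Suc n)^2 * (m * (4*m)^n)"
proof -
  have "ET_coeff m n = (\<Sum>t\<in>trees m n. \<Sum>s\<in>subtrees t. num_children s)" by (simp add: ET_coeff_def dag_edges_def)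
  also have "\<dots> \<le> (\<Sum>t\<in>trees m n. \<Sum>s\<in>subtrees t. n)"
  proof (intro sum_mono)
    fix t s assume t: "t \<in> trees m n" and s: "s \<in> subtrees t"
    obtain a ts where "s = Node a ts" by (cases s)
    then have "num_children s \<le> tsize s" by (simp)
    also have "\<dots> \<le> n" using subtree_size[OF s] t by (simp add: trees_def)
    finally show "num_children s \<le> n" .
  qed
  also have "\<dots> \<le> (\<Sum>t\<in>trees m n. Suc n * n)"
  proof (intro sum_mono)
    fix t assume t: "t \<in> trees m n"
    have "(\<Sum>s\<in>subtrees t. n) = card (subtrees t) * n" by simp
    also have "\<dots> \<le> Suc n * n" using card_subtrees[of t] t by (intro mult_right_mono) (auto simp: trees_def)
    finally show "(\<Sum>s\<in>subtrees t. n) \<le> Suc n * n" .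
  qed
  also have "\<dots> = card (trees m n) * (Suc n * n)" by simp
  also have "\<dots> \<le> (m * (4*m)^n) * (Suc n)^2" by (intro mult_mono tcount) (auto simp: power2_eq_square)
  finally show ?thesis by (simp add: mult.commute)
qed

lemma summ_bound:
  assumes m: "m \<ge> 1" and zr: "norm z < 1/(32*real m)" and c: "\<And>n. c n \<le> (Suc n)^2 * (m*(4*m)^n)"
  shows "summable (\<lambda>n. real (c n) * norm z ^ n)"
proof (rule summable_comparison_test')
  show "summable (\<lambda>n. real m * (1/2::real)^n)" by (intro summable_mult summable_geometric) simp
  fix n :: nat
  have mpos: "real m > 0" using m by simp
  define q where "q = 1/(32*real m)"
  have h16: "(4::real)^n * 4^n = 16^n"
    by (simp only: power_mult_distrib[symmetric]) simp
  have "norm (real (c n) * norm z ^ n) = real (c n) * norm z ^ n" by simp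
  also have "\<dots> \<le> real ((Suc n)^2 * (m*(4*m)^n)) * q^n"
    unfolding q_def using c[of n] zr by (intro mult_mono power_mono) (simp_all only: of_nat_le_iff, auto)
  also have "\<dots> \<le> real (4^n * (m*(4*m)^n)) * q^n"
    using sq_le_4pow[of n] by (intro mult_right_mono) (simp_all only: of_nat_le_iff, auto simp: q_def)
  also have "\<dots> = real m * (4 * (4 * real m) * q)^n"
    using h16 by (simp add: power_mult_distrib)
  also have "4 * (4 * real m) * q = 1/2" using mpos by (simp add: q_def)
  finally show "norm (real (c n) * norm z ^ n) \<le> real m * (1/2)^n" .
qed

lemma p_sums:
  assumes m: "m \<ge> 1" and z0: "z \<noteq> 0" and zr: "norm z < 1/(32 * real m)"
  shows "(\<lambda>n. of_nat (\<Sum>s\<in>trees m p. f s * dd m s n) * z^n) sums (of_nat (\<Sum>s\<in>trees m p. f s) * (bracket m p z / (2*z)))"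
proof -
  have "(\<lambda>n. \<Sum>s\<in>trees m p. of_nat (f s) * (of_nat (dd m s n) * z^n)) sums (\<Sum>s\<in>trees m p. of_nat (f s) * (bracket m p z / (2*z)))"
  proof (rule sums_sum)
    fix s assume s: "s \<in> trees m p"
    then have sl: "labelled_in m s" and sp: "tsize s = p" by (auto simp: trees_def)
    show "(\<lambda>n. of_nat (f s) * (of_nat (dd m s n) * z^n)) sums (of_nat (f s) * (bracket m p z / (2*z)))"
      using s_sums[OF m sl z0 zr] unfolding sp dd_def by (rule sums_mult)
  qed
  moreover have "(\<Sum>s\<in>trees m p. of_nat (f s) * (bracket m p z / (2*z))) = of_nat (\<Sum>s\<in>trees m p. f s) * (bracket m p z / (2*z))"
    by (simp only: of_nat_sum sum_distrib_right)
  moreover have "(\<lambda>n. \<Sum>s\<in>trees m p. of_nat (f s) * (of_nat (dd m s n) * z^n)) = (\<lambda>n. of_nat (\<Sum>s\<in>trees m p. f s * dd m s n) * z^n)"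
    by (simp only: of_nat_sum of_nat_mult sum_distrib_right mult.assoc)
  ultimately show ?thesis by simp
qed

lemma helper6: "(z::complex) \<noteq> 0 \<Longrightarrow> (2*z/3) * (3*(x/y) * (b/(2*z))) = x/y*b"
  by (cases "y = 0") (simp_all add: field_simps)

theorem main:
  fixes m :: nat
  assumes "m \<ge> 1"
  shows "\<exists>r>0. \<forall>z::complex. 0 < norm z \<and> norm z < r \<longrightarrow>
           (\<exists>S. (\<lambda>p. Tmp m p * bracket m p z) sums S \<and>
                (\<lambda>n. of_nat (NT_coeff m n) * z ^ n) sums (1 / (2 * z) * S)) \<and>
           (\<exists>S. (\<lambda>p. of_nat p * Tmp m p / of_nat (p + 2) * bracket m p z) sums S \<and>
                (\<lambda>n. of_nat (ET_coeff m n) * z ^ n) sums (3 / (2 * z) * S))"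
proof (intro exI[of _ "1/(32*real m)"] conjI allI impI)
  show "0 < 1/(32*real m)" using assms by simp
  fix z :: complex assume zz: "0 < norm z \<and> norm z < 1/(32*real m)"
  then have z0: "z \<noteq> 0" and zr: "norm z < 1/(32*real m)" by auto
  define e where "e = (\<lambda>p n. \<Sum>s\<in>trees m p. 1 * dd m s n)"
  have NTe: "NT_coeff m n = (\<Sum>p\<le>n. e p n)" for n unfolding e_def NT_eq by simp
  obtain S where S1: "(\<lambda>n. of_nat (\<Sum>p\<le>n. e p n) * z^n) sums S"
    and S2: "(\<lambda>p. of_nat (\<Sum>s\<in>trees m p. 1) * (bracket m p z / (2*z))) sums S"
  proof -
    have "\<exists>S. (\<lambda>n. of_nat (\<Sum>p\<le>n. e p n) * z^n) sums S \<and> (\<lambda>p. of_nat (\<Sum>s\<in>trees m p. 1) * (bracket m p z / (2*z))) sums S"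
    proof (rule double_sum)
      show "e p n = 0" if "n < p" for p n
        unfolding e_def using dd_vanish that by simp
      show "summable (\<lambda>n. real (\<Sum>p\<le>n. e p n) * norm z ^ n)"
        unfolding NTe[symmetric] by (rule summ_bound[OF assms zr NT_bound])
      show "(\<lambda>n. of_nat (e p n) * z^n) sums (of_nat (\<Sum>s\<in>trees m p. 1) * (bracket m p z / (2*z)))" for p
        unfolding e_def by (rule p_sums[OF assms z0 zr])
    qed
    then show ?thesis using that by blast
  qed
  show "\<exists>S. (\<lambda>p. Tmp m p * bracket m p z) sums S \<and>
                (\<lambda>n. of_nat (NT_coeff m n) * z ^ n) sums (1 / (2 * z) * S)"
  proof (intro exI conjI)
    have "(\<lambda>p. (2*z) * (of_nat (\<Sum>s\<in>trees m p. 1) * (bracket m p z / (2*z)))) sums ((2*z) * S)"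
      by (rule sums_mult[OF S2])
    moreover have "(2*z) * (of_nat (\<Sum>s\<in>trees m p. 1) * (bracket m p z / (2*z))) = Tmp m p * bracket m p z" for p
      using z0 card_trees_Tmp[of m p] by simp
    ultimately show "(\<lambda>p. Tmp m p * bracket m p z) sums ((2*z) * S)" by simp
    show "(\<lambda>n. of_nat (NT_coeff m n) * z ^ n) sums (1 / (2 * z) * ((2*z) * S))"
      using S1 z0 unfolding NTe by simp
  qed
  define e' where "e' = (\<lambda>p n. \<Sum>s\<in>trees m p. num_children s * dd m s n)"
  have ETe: "ET_coeff m n = (\<Sum>p\<le>n. e' p n)" for n unfolding e'_def ET_eq by simp
  obtain S' where S1': "(\<lambda>n. of_nat (\<Sum>p\<le>n. e' p n) * z^n) sums S'"
    and S2': "(\<lambda>p. of_nat (\<Sum>s\<in>trees m p. num_children s) * (bracket m p z / (2*z))) sums S'"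
  proof -
    have "\<exists>S. (\<lambda>n. of_nat (\<Sum>p\<le>n. e' p n) * z^n) sums S \<and> (\<lambda>p. of_nat (\<Sum>s\<in>trees m p. num_children s) * (bracket m p z / (2*z))) sums S"
    proof (rule double_sum)
      show "e' p n = 0" if "n < p" for p n
        unfolding e'_def using dd_vanish that by simp
      show "summable (\<lambda>n. real (\<Sum>p\<le>n. e' p n) * norm z ^ n)"
        unfolding ETe[symmetric] by (rule summ_bound[OF assms zr ET_bound])
      show "(\<lambda>n. of_nat (e' p n) * z^n) sums (of_nat (\<Sum>s\<in>trees m p. num_children s) * (bracket m p z / (2*z)))" for p
        unfolding e'_def by (rule p_sums[OF assms z0 zr])
    qed
    then show ?thesis using that by blast
  qed
  show "\<exists>S. (\<lambda>p. of_nat p * Tmp m p / of_nat (p + 2) * bracket m p z) sums S \<and>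
                (\<lambda>n. of_nat (ET_coeff m n) * z ^ n) sums (3 / (2 * z) * S)"
  proof (intro exI conjI)
    have "(\<lambda>p. (2*z/3) * (of_nat (\<Sum>s\<in>trees m p. num_children s) * (bracket m p z / (2*z)))) sums ((2*z/3) * S')"
      by (rule sums_mult[OF S2'])
    moreover have "(2*z/3) * (of_nat (\<Sum>s\<in>trees m p. num_children s) * (bracket m p z / (2*z))) = of_nat p * Tmp m p / of_nat (p + 2) * bracket m p z" for p
      unfolding W_closed[OF assms] using helper6[OF z0] by simp
    ultimately show "(\<lambda>p. of_nat p * Tmp m p / of_nat (p + 2) * bracket m p z) sums ((2*z/3) * S')" by simp
    show "(\<lambda>n. of_nat (ET_coeff m n) * z ^ n) sums (3 / (2 * z) * ((2*z/3) * S'))"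
      using S1' z0 unfolding ETe by simp
  qed
qed


theorem proposition1:
  fixes m :: nat
  assumes "m \<ge> 1"
  shows "\<exists>r>0. \<forall>z::complex. 0 < norm z \<and> norm z < r \<longrightarrow>
           (\<exists>S. (\<lambda>p. Tmp m p * bracket m p z) sums S \<and>
                (\<lambda>n. of_nat (NT_coeff m n) * z ^ n) sums (1 / (2 * z) * S)) \<and>
           (\<exists>S. (\<lambda>p. of_nat p * Tmp m p / of_nat (p + 2) * bracket m p z) sums S \<and>
                (\<lambda>n. of_nat (ET_coeff m n) * z ^ n) sums (3 / (2 * z) * S))"
  by (rule main[OF assms])

end
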